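(* Let $X$ and $Z$ be $T_1$-spaces with $\mathcal{D}(X)=\mathcal{D}(Z)$. Then $i(X)=i(Z)$. In particular, if $X$ is a $T_1$-space and no card of $X$ has an isolated point, then $X$ has no isolated point.
   Context: $i(X)$ denotes the cardinal number of isolated points of $X$. For a topological space $X$ and $x \in X$, the set $X\setminus\{x\}$ carries the subspace topology. A card of $X$ is a space homeomorphic to $X \setminus \{x\}$ for some $x \in X$. The deck of $X$ is $\mathcal{D}(X)=\{[X\setminus\{x\}]_\sim : x \in X\}$, where $[Y]_\sim$ denotes the homeomorphism class of $Y$. *)

theory Defs
  imports "HOL-Analysis.Analysis" "HOL-Library.Equipollence"
begin

text \<open>The set of isolated points of a space X; i(X) is its cardinality (compared via eqpoll).\<close>
definition isolated_points :: "'a topology \<Rightarrow> 'a set" where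
  "isolated_points X = {x \<in> topspace X. openin X {x}}"

definition card_of_space :: "'a topology \<Rightarrow> 'a \<Rightarrow> 'a topology" where
  "card_of_space X x = subtopology X (topspace X - {x})"

text \<open>Equality of decks (sets of homeomorphism classes of cards), unfolded:
  every card of X is homeomorphic to some card of Z and vice versa.\<close>
definition same_deck :: "'a topology \<Rightarrow> 'b topology \<Rightarrow> bool" where
  "same_deck X Z \<longleftrightarrow>
     (\<forall>x\<in>topspace X. \<exists>z\<in>topspace Z. card_of_space X x homeomorphic_space card_of_space Z z) \<and>
     (\<forall>z\<in>topspace Z. \<exists>x\<in>topspace X. card_of_space X x homeomorphic_space card_of_space Z z)"

end

theory Submission
  imports Defs
begin

lemma iso_card:
  assumes "t1_space X"
  shows "isolated_points (card_of_space X x) = isolated_points X - {x}"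
proof
  show "isolated_points (card_of_space X x) \<subseteq> isolated_points X - {x}"
  proof
    fix y assume y: "y \<in> isolated_points (card_of_space X x)"
    then have yS: "y \<in> topspace X" "y \<noteq> x"
      by (auto simp: isolated_points_def card_of_space_def)
    from y obtain U where U: "openin X U" "{y} = U \<inter> (topspace X - {x})"
      by (auto simp: isolated_points_def card_of_space_def openin_subtopology)
    have "{y} = U - {x}" using U openin_subset[OF U(1)] by blast
    moreover have "openin X (U - {x})"
    proof (cases "x \<in> topspace X")
      case True
      then show ?thesis using U(1) closedin_t1_singleton[OF assms True] by blast
    next
      case False
      then have "U - {x} = U" using openin_subset[OF U(1)] by blast
      then show ?thesis using U(1) by simp
    qed
    ultimately show "y \<in> isolated_points X - {x}" using yS
      by (auto simp: isolated_points_def)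
  qed
next
  show "isolated_points X - {x} \<subseteq> isolated_points (card_of_space X x)"
  proof
    fix y assume y: "y \<in> isolated_points X - {x}"
    then have "openin X {y}" "y \<in> topspace X" "y \<noteq> x" by (auto simp: isolated_points_def)
    moreover have "{y} = {y} \<inter> (topspace X - {x})" using calculation by blast
    ultimately show "y \<in> isolated_points (card_of_space X x)"
      unfolding isolated_points_def card_of_space_def openin_subtopology
      by auto
  qed
qed

lemma homeo_iso:
  assumes "X homeomorphic_space Y"
  shows "isolated_points X \<approx> isolated_points Y"
proof -
  obtain f where f: "homeomorphic_map X Y f" using assms homeomorphic_space by blast
  have inj: "inj_on f (topspace X)" using homeomorphic_imp_injective_map[OF f] .
  have sur: "f ` topspace X = topspace Y" using homeomorphic_imp_surjective_map[OF f] .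
  have "f ` isolated_points X = isolated_points Y"
  proof
    show "f ` isolated_points X \<subseteq> isolated_points Y"
      using homeomorphic_map_openness_eq[OF f] sur
      by (auto simp: isolated_points_def)
  next
    show "isolated_points Y \<subseteq> f ` isolated_points X"
    proof
      fix y assume y: "y \<in> isolated_points Y"
      then obtain x where x: "x \<in> topspace X" "y = f x" using sur
        by (auto simp: isolated_points_def)
      then have "openin X {x}" using homeomorphic_map_openness_eq[OF f, of "{x}"] y
        by (auto simp: isolated_points_def)
      then show "y \<in> f ` isolated_points X" using x by (auto simp: isolated_points_def)
    qed
  qed
  moreover have "inj_on f (isolated_points X)"
    using inj by (rule inj_on_subset) (auto simp: isolated_points_def)
  ultimately show ?thesis unfolding eqpoll_def bij_betw_def by blast
qed

lemma iso_sub: "isolated_points X \<subseteq> topspace X"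
  by (auto simp: isolated_points_def)

lemma iso_singleton: "topspace X = {a} \<Longrightarrow> isolated_points X = {a}"
proof -
  assume a: "topspace X = {a}"
  have "openin X {a}" using openin_topspace[of X] a by simp
  then show ?thesis unfolding isolated_points_def using a by auto
qed

lemma empty_homeo: "X homeomorphic_space Y \<Longrightarrow> topspace X = {} \<longleftrightarrow> topspace Y = {}"
proof -
  assume "X homeomorphic_space Y"
  then obtain f where "homeomorphic_map X Y f" using homeomorphic_space by blast
  then have "f ` topspace X = topspace Y" by (rule homeomorphic_imp_surjective_map)
  then show ?thesis by (metis image_is_empty)
qed

lemma key:
  assumes "t1_space X" "t1_space Z" "same_deck X Z" "x \<in> topspace X"
  shows "\<exists>z\<in>topspace Z. isolated_points X - {x} \<approx> isolated_points Z - {z}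
            \<and> (topspace X - {x} = {} \<longleftrightarrow> topspace Z - {z} = {})"
proof -
  obtain z where z: "z \<in> topspace Z" "card_of_space X x homeomorphic_space card_of_space Z z"
    using assms(3,4) unfolding same_deck_def by blast
  have e1: "topspace (card_of_space X x) = topspace X - {x}" by (auto simp: card_of_space_def)
  have e2: "topspace (card_of_space Z z) = topspace Z - {z}" by (auto simp: card_of_space_def)
  have h1: "isolated_points X - {x} \<approx> isolated_points Z - {z}"
    using homeo_iso[OF z(2)] unfolding iso_card[OF assms(1)] iso_card[OF assms(2)] .
  have h2: "topspace X - {x} = {} \<longleftrightarrow> topspace Z - {z} = {}"
    using empty_homeo[OF z(2)] unfolding e1 e2 .
  show ?thesis using z(1) h1 h2 by blast
qed

lemma inf_diff: "infinite A \<Longrightarrow> A - {x} \<approx> A"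
proof (cases "x \<in> A")
  case True
  assume inf: "infinite A"
  then have "infinite (A - {x})" by simp
  then have "insert x (A - {x}) \<approx> A - {x}" by (rule infinite_insert_eqpoll)
  moreover have "insert x (A - {x}) = A" using True by blast
  ultimately show ?thesis by (simp add: eqpoll_sym)
next
  case False
  then show ?thesis by (simp add: eqpoll_refl)
qed

lemma comb_inf:
  assumes "infinite A" "A - {x} \<approx> B - {z}"
  shows "A \<approx> B"
proof -
  have 1: "A \<approx> A - {x}" using inf_diff[OF assms(1)] by (rule eqpoll_sym)
  have "infinite (A - {x})" using assms(1) by simp
  then have "infinite (B - {z})" using eqpoll_finite_iff[OF assms(2)] by blast
  then have "infinite B" by simp
  then have 2: "B - {z} \<approx> B" by (rule inf_diff)
  show ?thesis using eqpoll_trans[OF eqpoll_trans[OF 1 assms(2)] 2] .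
qed

lemma comb_fin:
  assumes fin: "finite A" "finite B" and ne: "A \<noteq> {}" and sub: "A \<subseteq> PX" "B \<subseteq> PZ"
  and K: "\<And>x. x \<in> PX \<Longrightarrow> \<exists>z\<in>PZ. A - {x} \<approx> B - {z} \<and> (PX - {x} = {} \<longleftrightarrow> PZ - {z} = {})"
  and sA: "\<And>a. PX = {a} \<Longrightarrow> A = {a}" and sB: "\<And>a. PZ = {a} \<Longrightarrow> B = {a}"
  shows "card B \<le> card A \<and> B \<noteq> {}"
proof -
  obtain x where x: "x \<in> A" using ne by blast
  have xP: "x \<in> PX" using x sub by blast
  obtain z where z: "z \<in> PZ" "A - {x} \<approx> B - {z}" "PX - {x} = {} \<longleftrightarrow> PZ - {z} = {}"
    using K[OF xP] by blast
  have fA: "finite (A - {x})" using fin by simp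
  have fB: "finite (B - {z})" using fin by simp
  have c: "card (A - {x}) = card (B - {z})" using z(2) eqpoll_iff_card[OF fA fB] by simp
  have cA: "card (A - {x}) = card A - 1" using x fin by simp
  have cB: "card (B - {z}) \<ge> card B - 1" by (simp add: card_Diff_singleton_if)
  have "card A > 0" using ne fin card_gt_0_iff by blast
  then have A1: "card A \<ge> 1" by simp
  have le: "card B \<le> card A" using c cA cB A1 by linarith
  have "B \<noteq> {}"
  proof
    assume B: "B = {}"
    then have "card (A - {x}) = 0" using c by simp
    then have "A - {x} = {}" using fin by simp
    then have Ax: "A = {x}" using x by blast
    show False
    proof (cases "PX = {x}")
      case True
      then have "PZ - {z} = {}" using z(3) by simp
      then have "PZ = {z}" using z(1) by blast
      then show False using sB B by blast
    next
      case False
      then obtain x1 where x1: "x1 \<in> PX" "x1 \<noteq> x" using x sub by blast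
      then obtain z1 where e: "A - {x1} \<approx> B - {z1}" using K[OF x1(1)] by blast
      have h1: "A - {x1} = {x}" using Ax x1 by blast
      have h2: "B - {z1} = {}" using B by blast
      have "{x} \<approx> ({}::'b set)" using e unfolding h1 h2 .
      then show False using eqpoll_iff_card[of "{x}" "{}::'b set"] by simp
    qed
  qed
  then show ?thesis using le by blast
qed

lemma same_deck_sym: "same_deck X Z \<Longrightarrow> same_deck Z X"
proof -
  assume "same_deck X Z"
  then have a: "\<forall>x\<in>topspace X. \<exists>z\<in>topspace Z. card_of_space X x homeomorphic_space card_of_space Z z"
    and b: "\<forall>z\<in>topspace Z. \<exists>x\<in>topspace X. card_of_space X x homeomorphic_space card_of_space Z z"
    unfolding same_deck_def by blast+
  have "\<forall>z\<in>topspace Z. \<exists>x\<in>topspace X. card_of_space Z z homeomorphic_space card_of_space X x"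
  proof
    fix z assume "z \<in> topspace Z"
    then obtain x where x1: "x \<in> topspace X" and x2: "card_of_space X x homeomorphic_space card_of_space Z z" using b by blast
    have "card_of_space Z z homeomorphic_space card_of_space X x" using x2 by (rule homeomorphic_space_sym[THEN iffD1])
    then show "\<exists>x\<in>topspace X. card_of_space Z z homeomorphic_space card_of_space X x"
      using x1 by blast
  qed
  moreover have "\<forall>x\<in>topspace X. \<exists>z\<in>topspace Z. card_of_space Z z homeomorphic_space card_of_space X x"
  proof
    fix x assume "x \<in> topspace X"
    then obtain z where z1: "z \<in> topspace Z" and z2: "card_of_space X x homeomorphic_space card_of_space Z z" using a by blast
    have "card_of_space Z z homeomorphic_space card_of_space X x" using z2 by (rule homeomorphic_space_sym[THEN iffD1])
    then show "\<exists>z\<in>topspace Z. card_of_space Z z homeomorphic_space card_of_space X x"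
      using z1 by blast
  qed
  ultimately show "same_deck Z X" unfolding same_deck_def by blast
qed

theorem theorem4p3:
  shows "(\<forall>(X::'a topology) (Z::'b topology).
            t1_space X \<and> t1_space Z \<and> same_deck X Z \<longrightarrow>
            isolated_points X \<approx> isolated_points Z)
       \<and> (\<forall>X::'a topology.
            t1_space X \<and> (\<nexists>a. topspace X = {a}) \<and>
            (\<forall>x\<in>topspace X. isolated_points (card_of_space X x) = {}) \<longrightarrow>
            isolated_points X = {})"
proof (intro conjI allI impI)
  fix X :: "'a topology" and Z :: "'b topology"
  assume H: "t1_space X \<and> t1_space Z \<and> same_deck X Z"
  then have t1: "t1_space X" "t1_space Z" and sd1: "same_deck X Z" by blast+
  then have sd2: "same_deck Z X" using same_deck_sym by blast
  note sd = sd1 sd2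
  define A where "A = isolated_points X"
  define B where "B = isolated_points Z"
  have KX: "\<And>x. x \<in> topspace X \<Longrightarrow> \<exists>z\<in>topspace Z. A - {x} \<approx> B - {z} \<and> (topspace X - {x} = {} \<longleftrightarrow> topspace Z - {z} = {})"
    unfolding A_def B_def using key[OF t1 sd(1)] by blast
  have KZ: "\<And>z. z \<in> topspace Z \<Longrightarrow> \<exists>x\<in>topspace X. B - {z} \<approx> A - {x} \<and> (topspace Z - {z} = {} \<longleftrightarrow> topspace X - {x} = {})"
    unfolding A_def B_def using key[OF t1(2,1) sd(2)] by blast
  have sA: "\<And>a. topspace X = {a} \<Longrightarrow> A = {a}" unfolding A_def by (rule iso_singleton)
  have sB: "\<And>a. topspace Z = {a} \<Longrightarrow> B = {a}" unfolding B_def by (rule iso_singleton)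
  have subA: "A \<subseteq> topspace X" and subB: "B \<subseteq> topspace Z" unfolding A_def B_def by (rule iso_sub)+
  show "isolated_points X \<approx> isolated_points Z"
    unfolding A_def[symmetric] B_def[symmetric]
  proof (cases "topspace X = {}")
    case True
    then have "topspace Z = {}" using KZ by blast
    then have "A = {}" "B = {}" using True subA subB by blast+
    then show "A \<approx> B" by (simp add: eqpoll_refl)
  next
    case False
    then obtain x where x: "x \<in> topspace X" by blast
    then obtain z where z: "z \<in> topspace Z" "A - {x} \<approx> B - {z}" using KX by blast
    show "A \<approx> B"
    proof (cases "finite A \<and> finite B")
      case False
      then have "infinite A \<or> infinite B" by blast
      then show ?thesis
      proof
        assume "infinite A" then show ?thesis using comb_inf[OF _ z(2)] by blast
      next
        assume "infinite B"
        moreover obtain x' where "x' \<in> topspace X" and e: "B - {z} \<approx> A - {x'}" using KZ z(1) by blast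
        ultimately have "B \<approx> A" using comb_inf[OF _ e] by blast
        then show ?thesis by (simp add: eqpoll_sym)
      qed
    next
      case True
      have 1: "A \<noteq> {} \<Longrightarrow> card B \<le> card A \<and> B \<noteq> {}"
        using comb_fin[OF _ _ _ subA subB KX sA sB] True by blast
      have 2: "B \<noteq> {} \<Longrightarrow> card A \<le> card B \<and> A \<noteq> {}"
        using comb_fin[OF _ _ _ subB subA KZ sB sA] True by blast
      have "card A = card B"
        using 1 2 by (cases "A = {}"; cases "B = {}") auto
      then show ?thesis using True eqpoll_iff_card by blast
    qed
  qed
next
  fix X :: "'a topology"
  assume H: "t1_space X \<and> (\<nexists>a. topspace X = {a}) \<and>
            (\<forall>x\<in>topspace X. isolated_points (card_of_space X x) = {})"
  show "isolated_points X = {}"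
  proof (rule ccontr)
    assume "isolated_points X \<noteq> {}"
    then obtain a where a: "a \<in> isolated_points X" by blast
    then have "a \<in> topspace X" by (auto simp: isolated_points_def)
    moreover have "topspace X \<noteq> {a}" using H by blast
    ultimately obtain b where b: "b \<in> topspace X" "b \<noteq> a" by blast
    have "a \<in> isolated_points (card_of_space X b)"
      using iso_card[of X b] H a b by blast
    then show False using H b by blast
  qed
qed

end
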